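(* For all $n\geq 0$, $$d_n=\sum_{k=0}^{n}(-1)^{n-k}\binom{n}{k}m_k,$$ where $d_n$ is the number of symmetric Dyck paths of length $2n$ and $m_k$ is the number of symmetric Motzkin paths of length $2k$.
   Context: Steps: $U=(1,1)$, $D=(1,-1)$, $h=(1,0)$. A Dyck path of length $2n$ is a lattice path from $(0,0)$ to $(2n,0)$ using steps $U,D$ that never goes below the $x$-axis; a Motzkin path of length $2n$ is the same but steps $U,D,h$ are allowed. Such a path with step sequence $s_1\cdots s_{2n}$ is symmetric if for every $i$, $s_{2n+1-i}$ is the mirror of $s_i$ (mirror of $U$ is $D$, of $D$ is $U$, of $h$ is $h$), i.e. the path is invariant under reflection in the line $x=n$. *)

theory Defs
  imports Main
begin

datatype step = U | D | H

fun step_val :: "step \<Rightarrow> int" where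
  "step_val U = 1" | "step_val D = -1" | "step_val H = 0"

fun mirror :: "step \<Rightarrow> step" where
  "mirror U = D" | "mirror D = U" | "mirror H = H"

definition nonneg_bridge :: "step list \<Rightarrow> bool" where
  "nonneg_bridge s \<longleftrightarrow>
     (\<forall>i\<le>length s. (\<Sum>j<i. step_val (s ! j)) \<ge> 0) \<and> (\<Sum>j<length s. step_val (s ! j)) = 0"

definition dyck_path :: "nat \<Rightarrow> step list \<Rightarrow> bool" where
  "dyck_path n s \<longleftrightarrow> length s = 2 * n \<and> set s \<subseteq> {U, D} \<and> nonneg_bridge s"

definition motzkin_path :: "nat \<Rightarrow> step list \<Rightarrow> bool" where
  "motzkin_path n s \<longleftrightarrow> length s = 2 * n \<and> nonneg_bridge s"

text \<open>Symmetric: s_{2n+1-i} is the mirror of s_i (1-based); 0-based: s!(L-1-i) = mirror (s!i).\<close>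
definition symmetric_path :: "step list \<Rightarrow> bool" where
  "symmetric_path s \<longleftrightarrow> (\<forall>i<length s. s ! (length s - 1 - i) = mirror (s ! i))"

definition sym_dyck :: "nat \<Rightarrow> nat" where
  "sym_dyck n = card {s. dyck_path n s \<and> symmetric_path s}"

definition sym_motzkin :: "nat \<Rightarrow> nat" where
  "sym_motzkin n = card {s. motzkin_path n s \<and> symmetric_path s}"

end

theory Submission
  imports Defs
begin

fun okm :: "int \<Rightarrow> step list \<Rightarrow> bool" where
  "okm h [] = True"
| "okm h (x#xs) = (0 \<le> h + step_val x \<and> okm (h + step_val x) xs)"

definition paths :: "step set \<Rightarrow> nat \<Rightarrow> int \<Rightarrow> step list set" where
  "paths P n h = {s. length s = n \<and> set s \<subseteq> P \<and> okm h s}"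

lemma UNIV_step: "(UNIV::step set) = {U,D,H}"
  using step.exhaust by auto

lemma finite_step: "finite (A::step set)"
proof -
  have "finite (UNIV::step set)" by (simp add: UNIV_step)
  then show ?thesis by (rule rev_finite_subset) simp
qed

lemma finite_paths: "finite (paths P n h)"
proof -
  have "paths P n h \<subseteq> {s. set s \<subseteq> UNIV \<and> length s = n}" by (auto simp: paths_def)
  moreover have "finite {s::step list. set s \<subseteq> UNIV \<and> length s = n}"
    by (rule finite_lists_length_eq) (rule finite_step)
  ultimately show ?thesis using finite_subset by blast
qed

lemma paths_Suc: "paths P (Suc n) h =
  (\<lambda>(x,s). x#s) ` (SIGMA x:{x\<in>P. 0 \<le> h+step_val x}. paths P n (h+step_val x))"
proof (rule set_eqI)
  fix t
  show "t \<in> paths P (Suc n) h \<longleftrightarrow> t \<in> (\<lambda>(x,s). x#s) ` (SIGMA x:{x\<in>P. 0 \<le> h+step_val x}. paths P n (h+step_val x))"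
  proof (cases t)
    case Nil then show ?thesis by (auto simp: paths_def)
  next
    case (Cons y ys)
    then show ?thesis by (auto simp: paths_def image_iff)
  qed
qed

lemma card_paths_Suc: "card (paths P (Suc n) h) =
  (\<Sum>x\<in>P. if 0 \<le> h+step_val x then card (paths P n (h+step_val x)) else 0)"
proof -
  have inj: "inj_on (\<lambda>(x,s). x#s) A" for A :: "(step \<times> step list) set"
    by (auto simp: inj_on_def)
  have "card (paths P (Suc n) h) = card (SIGMA x:{x\<in>P. 0 \<le> h+step_val x}. paths P n (h+step_val x))"
    unfolding paths_Suc by (rule card_image[OF inj])
  also have "\<dots> = (\<Sum>x\<in>{x\<in>P. 0 \<le> h+step_val x}. card (paths P n (h+step_val x)))"
    by (rule card_SigmaI) (auto intro: finite_step finite_paths)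
  also have "\<dots> = (\<Sum>x\<in>P. if 0 \<le> h+step_val x then card (paths P n (h+step_val x)) else 0)"
    by (rule sum.inter_filter) (rule finite_step)
  finally show ?thesis .
qed

lemma paths_0: "paths P 0 h = {[]}"
  by (auto simp: paths_def)

definition aa :: "nat \<Rightarrow> int \<Rightarrow> int" where "aa n h = int (card (paths {U,D} n h))"
definition bb :: "nat \<Rightarrow> int \<Rightarrow> int" where "bb n h = int (card (paths UNIV n h))"

lemma aa_Suc: "0 \<le> h \<Longrightarrow> aa (Suc n) h = aa n (h+1) + (if 1 \<le> h then aa n (h-1) else 0)"
  unfolding aa_def card_paths_Suc by simp

lemma bb_Suc: "0 \<le> h \<Longrightarrow> bb (Suc n) h = bb n (h+1) + bb n h + (if 1 \<le> h then bb n (h-1) else 0)"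
  unfolding bb_def card_paths_Suc UNIV_step by simp

lemma delta:
  fixes F :: "nat \<Rightarrow> int"
  shows "(\<Sum>k\<le>Suc n. (-1)^(Suc n - k) * int (Suc n choose k) * F k)
       = (\<Sum>k\<le>n. (-1)^(n-k) * int (n choose k) * (F (Suc k) - F k))"
proof -
  have "(\<Sum>k\<le>Suc n. (-1)^(Suc n - k) * int (Suc n choose k) * F k)
     = (-1)^(Suc n) * F 0 + (\<Sum>k\<le>n. (-1)^(n - k) * int (Suc n choose Suc k) * F (Suc k))"
    unfolding sum.atMost_Suc_shift by simp
  also have "\<dots> = (-1)^(Suc n) * F 0 + (\<Sum>k\<le>n. (-1)^(n - k) * int (n choose Suc k) * F (Suc k))
       + (\<Sum>k\<le>n. (-1)^(n - k) * int (n choose k) * F (Suc k))"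
    by (simp add: sum.distrib algebra_simps)
  also have "(-1)^(Suc n) * F 0 + (\<Sum>k\<le>n. (-1)^(n - k) * int (n choose Suc k) * F (Suc k))
      = (\<Sum>k\<le>Suc n. (-1)^(Suc n - k) * int (n choose k) * F k)"
    unfolding sum.atMost_Suc_shift by simp
  also have "\<dots> = (\<Sum>k\<le>n. (-1)^(Suc n - k) * int (n choose k) * F k)"
    by (simp add: sum.atMost_Suc)
  also have "\<dots> = (\<Sum>k\<le>n. - ((-1)^(n - k) * int (n choose k) * F k))"
    by (rule sum.cong) (auto simp: Suc_diff_le)
  finally show ?thesis by (simp add: sum_subtractf sum_negf algebra_simps)
qed

definition cc :: "nat \<Rightarrow> int \<Rightarrow> int" where
  "cc n h = (\<Sum>k\<le>n. (-1)^(n-k) * int (n choose k) * bb k h)"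

lemma cc_aa: "0 \<le> h \<Longrightarrow> cc n h = aa n h"
proof (induction n arbitrary: h)
  case 0
  then show ?case by (simp add: cc_def aa_def bb_def paths_0)
next
  case (Suc n)
  have "cc (Suc n) h = (\<Sum>k\<le>n. (-1)^(n-k) * int (n choose k) * (bb (Suc k) h - bb k h))"
    unfolding cc_def by (rule delta)
  also have "\<dots> = (\<Sum>k\<le>n. (-1)^(n-k) * int (n choose k) * bb k (h+1)
     + (if 1 \<le> h then (-1)^(n-k) * int (n choose k) * bb k (h-1) else 0))"
    using Suc.prems by (intro sum.cong) (auto simp: bb_Suc algebra_simps)
  also have "\<dots> = cc n (h+1) + (if 1 \<le> h then cc n (h-1) else 0)"
    by (simp add: cc_def sum.distrib sum.If_cases)
  also have "\<dots> = aa n (h+1) + (if 1 \<le> h then aa n (h-1) else 0)"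
    using Suc by simp
  also have "\<dots> = aa (Suc n) h" using Suc.prems aa_Suc by simp
  finally show ?case .
qed



lemma mirror_mirror[simp]: "mirror (mirror x) = x" by (cases x) auto
lemma step_val_mirror[simp]: "step_val (mirror x) = - step_val x" by (cases x) auto

lemma sum_mirror[simp]: "sum_list (map step_val (map mirror l)) = - sum_list (map step_val l)"
  by (induction l) auto

lemma sum_mirror2[simp]: "sum_list (map (step_val \<circ> mirror) l) = - sum_list (map step_val l)"
  by (induction l) auto

lemma psum_eq: "i \<le> length s \<Longrightarrow> (\<Sum>j<i. step_val (s ! j)) = sum_list (map step_val (take i s))"
  by (simp add: sum_list_sum_nth atLeast0LessThan min_def)

lemma all_le_Suc: "(\<forall>i\<le>Suc m. Q i) \<longleftrightarrow> Q 0 \<and> (\<forall>j\<le>m. Q (Suc j))"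
  by (metis Suc_le_mono le0 not0_implies_Suc)

lemma okm_iff: "0 \<le> h \<Longrightarrow> okm h s \<longleftrightarrow> (\<forall>i\<le>length s. 0 \<le> h + sum_list (map step_val (take i s)))"
proof (induction s arbitrary: h)
  case Nil then show ?case by simp
next
  case (Cons x xs)
  show ?case
  proof (cases "0 \<le> h + step_val x")
    case True
    then show ?thesis using Cons.IH[OF True] Cons.prems
      by (simp only: all_le_Suc length_Cons) (simp add: add.assoc)
  next
    case False
    then show ?thesis
      apply (simp only: all_le_Suc length_Cons)
      apply simp
      apply (rule impI, rule exI[of _ 0])
      by simp
  qed
qed

definition ff :: "step list \<Rightarrow> step list" where "ff s = s @ rev (map mirror s)"

lemma bridge_iff:
  "nonneg_bridge (ff s) \<longleftrightarrow> okm 0 s"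
proof -
  let ?n = "length s"
  let ?ps = "\<lambda>l i. sum_list (map step_val (take i l))"
  have lf: "length (ff s) = 2 * ?n" by (simp add: ff_def)
  have tot: "?ps (ff s) (2 * ?n) = 0" by (simp add: ff_def rev_map[symmetric] sum_list_rev)
  have low: "?ps (ff s) i = ?ps s i" if "i \<le> ?n" for i
    using that by (simp add: ff_def)
  have high: "?ps (ff s) (?n + j) = ?ps s (?n - j)" if "j \<le> ?n" for j
  proof -
    have "?ps (ff s) (?n + j) = sum_list (map step_val s) + sum_list (map step_val (take j (rev (map mirror s))))"
      by (simp add: ff_def)
    also have "take j (rev (map mirror s)) = rev (map mirror (drop (?n - j) s))"
      by (simp add: take_rev drop_map)
    also have "sum_list (map step_val s) = ?ps s (?n - j) + sum_list (map step_val (drop (?n - j) s))"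
      by (metis append_take_drop_id map_append sum_list_append)
    finally show ?thesis by (simp add: rev_map[symmetric] sum_list_rev)
  qed
  have "nonneg_bridge (ff s) \<longleftrightarrow> (\<forall>i\<le>2 * ?n. 0 \<le> ?ps (ff s) i)"
    unfolding nonneg_bridge_def lf using tot by (simp add: psum_eq lf)
  also have "\<dots> \<longleftrightarrow> (\<forall>i\<le>?n. 0 \<le> ?ps s i)"
  proof
    assume A: "\<forall>i\<le>2 * ?n. 0 \<le> ?ps (ff s) i"
    show "\<forall>i\<le>?n. 0 \<le> ?ps s i"
      using A low by (metis le_trans mult_2 le_add1)
  next
    assume A: "\<forall>i\<le>?n. 0 \<le> ?ps s i"
    show "\<forall>i\<le>2 * ?n. 0 \<le> ?ps (ff s) i"
    proof (intro allI impI)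
      fix i assume i: "i \<le> 2 * ?n"
      show "0 \<le> ?ps (ff s) i"
      proof (cases "i \<le> ?n")
        case True then show ?thesis using A low by simp
      next
        case False
        then obtain j where j: "i = ?n + j" "j \<le> ?n" using i
          by (metis le_add_diff_inverse mult_2 nat_le_linear add_le_cancel_left)
        then show ?thesis using A high by simp
      qed
    qed
  qed
  also have "\<dots> \<longleftrightarrow> okm 0 s" using okm_iff[of 0 s] by simp
  finally show ?thesis .
qed

lemma sym_ff: "symmetric_path (ff s)"
  unfolding symmetric_path_def ff_def
  by (auto simp: nth_append rev_nth)

lemma sym_eq_ff:
  assumes "length t = 2 * n" "symmetric_path t"
  shows "t = ff (take n t)"
proof (rule nth_equalityI)
  show "length t = length (ff (take n t))" using assms by (simp add: ff_def)
next
  fix i assume i: "i < length t"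
  show "t ! i = ff (take n t) ! i"
  proof (cases "i < n")
    case True then show ?thesis using assms(1) by (simp add: ff_def nth_append min_def)
  next
    case False
    have "t ! (length t - 1 - (length t - 1 - i)) = mirror (t ! (length t - 1 - i))"
      using assms(2) i unfolding symmetric_path_def by auto
    then have "t ! i = mirror (t ! (2*n - 1 - i))" using i assms(1) by simp
    then show ?thesis using False i assms(1)
      by (simp add: ff_def nth_append rev_nth min_def mult_2)
  qed
qed

lemma set_ff: "set (ff s) = set s \<union> mirror ` set s" by (auto simp: ff_def)

lemma card_sym:
  assumes P: "mirror ` P \<subseteq> P"
  shows "card {t. length t = 2*n \<and> set t \<subseteq> P \<and> nonneg_bridge t \<and> symmetric_path t} = card (paths P n 0)"
proof -
  have eq: "{t. length t = 2*n \<and> set t \<subseteq> P \<and> nonneg_bridge t \<and> symmetric_path t} = ff ` paths P n 0"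
  proof (rule set_eqI, rule iffI)
    fix t assume "t \<in> {t. length t = 2*n \<and> set t \<subseteq> P \<and> nonneg_bridge t \<and> symmetric_path t}"
    then have t: "length t = 2*n" "set t \<subseteq> P" "nonneg_bridge t" "symmetric_path t" by auto
    have e: "t = ff (take n t)" using sym_eq_ff t by blast
    have "take n t \<in> paths P n 0"
      unfolding paths_def using t e bridge_iff[of "take n t"] set_take_subset[of n t]
      by auto
    then show "t \<in> ff ` paths P n 0" using e by blast
  next
    fix t assume "t \<in> ff ` paths P n 0"
    then obtain s where s: "s \<in> paths P n 0" "t = ff s" by blast
    then show "t \<in> {t. length t = 2*n \<and> set t \<subseteq> P \<and> nonneg_bridge t \<and> symmetric_path t}"
      using P[unfolded image_subset_iff] bridge_iff sym_ff unfolding paths_def set_ff by (auto simp: ff_def)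
  qed
  have inj: "inj_on ff (paths P n 0)"
    by (auto simp: inj_on_def ff_def paths_def)
  show ?thesis unfolding eq by (rule card_image[OF inj])
qed

lemma dyck_card: "sym_dyck n = card (paths {U,D} n 0)"
proof -
  have "mirror ` {U,D} \<subseteq> {U,D}" by auto
  from card_sym[OF this, of n] show ?thesis
    unfolding sym_dyck_def dyck_path_def by (simp add: conj_assoc)
qed

lemma motzkin_card: "sym_motzkin n = card (paths UNIV n 0)"
proof -
  have "mirror ` UNIV \<subseteq> UNIV" by auto
  from card_sym[OF this, of n] show ?thesis
    unfolding sym_motzkin_def motzkin_path_def by (simp add: conj_assoc)
qed

theorem theorem3p2:
  fixes n :: nat
  shows "int (sym_dyck n) = (\<Sum>k=0..n. (-1) ^ (n - k) * int (n choose k) * int (sym_motzkin k))"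
proof -
  have "int (sym_dyck n) = aa n 0" by (simp add: dyck_card aa_def)
  also have "\<dots> = cc n 0" using cc_aa[of 0 n] by simp
  also have "\<dots> = (\<Sum>k=0..n. (-1) ^ (n - k) * int (n choose k) * int (sym_motzkin k))"
    by (simp add: cc_def bb_def motzkin_card atLeast0AtMost)
  finally show ?thesis .
qed

end
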